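(* For all integers $k\ge0$, $l\ge1$, the following identities hold on $R^k$: \[i(\alpha)\circ X^l-X^l\circ i(\alpha)=r(l,k)\,X^{l-1},\qquad X\circ i(\alpha)^l-i(\alpha)^l\circ X=-r(l,k-l+1)\,i(\alpha)^{l-1},\] where $r(l,k)=-\frac{l}{2}\big(2(n+1)\delta+2k+l-1\big)$.
   Context: Let $n\ge1$, $M=\mathbb{R}^{2n+1}$ with coordinates $(q^1,\dots,q^n,p^1,\dots,p^n,t)$. For $\mu\in\mathbb{R}$, $\mathcal{S}^k_\mu$ denotes the space of smooth functions $S(x,\xi)$ on $M\times\mathbb{R}^{2n+1}$ homogeneous polynomial of degree $k$ in $\xi=(\xi_{q^1},\dots,\xi_{q^n},\xi_{p^1},\dots,\xi_{p^n},\xi_t)$. Fix $\delta\in\mathbb{R}$ and set $R^k=\mathcal{S}^k_{\delta+\frac{k}{n+1}}$ for $k\ge0$, $R^{j}=0$ for $j<0$. Let $E_s=\sum_i(p^i\partial_{p^i}+q^i\partial_{q^i})$, $\langle E_s,\xi\rangle=\sum_i(p^i\xi_{p^i}+q^i\xi_{q^i})$, $D(S)=\sum_i(\xi_{q^i}\partial_{p^i}S-\xi_{p^i}\partial_{q^i}S)+\xi_tE_s(S)-\langle E_s,\xi\rangle\partial_tS$. Operators: $i(\alpha):R^k\to R^{k-1}$, $i(\alpha)(S)=\frac12\big(\sum_i(p^i\partial_{\xi_{q^i}}S-q^i\partial_{\xi_{p^i}}S)-\partial_{\xi_t}S\big)$; $X:R^k\to R^{k+1}$, $X(S)=D(S)+(2(n+1)\delta+k)\xi_tS$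 (the exponent of each operator is applied with the appropriate degree of its argument). *)

theory Defs
  imports "HOL-Analysis.Analysis"
begin

text \<open>A point of M = R^(2n+1): (q, p, t) with q, p in R^n (index type 'n, n = CARD('n)).
 A point of the phase space M x R^(2n+1) is a pair (x, xi) of such triples.\<close>
type_synonym 'n pt = "(real^'n) \<times> (real^'n) \<times> real"

definition qc :: "'n::finite pt \<Rightarrow> 'n \<Rightarrow> real" where "qc x i = fst x $ i"
definition pc :: "'n::finite pt \<Rightarrow> 'n \<Rightarrow> real" where "pc x i = fst (snd x) $ i"
definition tc :: "'n::finite pt \<Rightarrow> real" where "tc x = snd (snd x)"

definition eq :: "'n::finite \<Rightarrow> 'n pt" where "eq i = (axis i 1, 0, 0)"
definition ep :: "'n::finite \<Rightarrow> 'n pt" where "ep i = (0, axis i 1, 0)"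
definition et :: "'n::finite pt" where "et = (0, 0, 1)"

definition pd :: "'a::real_normed_vector \<Rightarrow> ('a \<Rightarrow> real) \<Rightarrow> 'a \<Rightarrow> real" where
  "pd v f z = deriv (\<lambda>s. f (z + s *\<^sub>R v)) 0"

fun iter_pd :: "'a::real_normed_vector list \<Rightarrow> ('a \<Rightarrow> real) \<Rightarrow> 'a \<Rightarrow> real" where
  "iter_pd [] f = f"
| "iter_pd (v # vs) f = pd v (iter_pd vs f)"

definition smooth_fn :: "('a::euclidean_space \<Rightarrow> real) \<Rightarrow> bool" where
  "smooth_fn f \<longleftrightarrow> (\<forall>vs. set vs \<subseteq> Basis \<longrightarrow>
      continuous_on UNIV (iter_pd vs f) \<and>
      (\<forall>v\<in>Basis. \<forall>z. (\<lambda>s. iter_pd vs f (z + s *\<^sub>R v)) differentiable (at 0)))"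

definition multi_idx :: "nat \<Rightarrow> ('n::finite pt \<Rightarrow> nat) set" where
  "multi_idx k = {a. (\<forall>b. b \<notin> Basis \<longrightarrow> a b = 0) \<and> (\<Sum>b\<in>Basis. a b) = k}"

definition hom_poly_xi :: "nat \<Rightarrow> ('n::finite pt \<times> 'n pt \<Rightarrow> real) \<Rightarrow> bool" where
  "hom_poly_xi k S \<longleftrightarrow> (\<exists>c. \<forall>x xi. S (x, xi) =
      (\<Sum>a\<in>multi_idx k. c a x * (\<Prod>b\<in>Basis. (xi \<bullet> b) ^ a b)))"

text \<open>The space R^k = S^k_{delta + k/(n+1)} (as a space of functions; the weight only
 records the transformation law and does not enter the operators); R^j = 0 for j < 0.\<close>
definition Rsp :: "int \<Rightarrow> ('n::finite pt \<times> 'n pt \<Rightarrow> real) set" where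
  "Rsp k = (if k < 0 then {\<lambda>_. 0} else {S. smooth_fn S \<and> hom_poly_xi (nat k) S})"

definition dx :: "'n::finite pt \<Rightarrow> ('n pt \<times> 'n pt \<Rightarrow> real) \<Rightarrow> 'n pt \<times> 'n pt \<Rightarrow> real" where
  "dx v = pd (v, 0)"
definition dxi :: "'n::finite pt \<Rightarrow> ('n pt \<times> 'n pt \<Rightarrow> real) \<Rightarrow> 'n pt \<times> 'n pt \<Rightarrow> real" where
  "dxi v = pd (0, v)"

definition Es :: "('n::finite pt \<times> 'n pt \<Rightarrow> real) \<Rightarrow> 'n pt \<times> 'n pt \<Rightarrow> real" where
  "Es S z = (\<Sum>i\<in>UNIV. pc (fst z) i * dx (ep i) S z + qc (fst z) i * dx (eq i) S z)"

definition Dop :: "('n::finite pt \<times> 'n pt \<Rightarrow> real) \<Rightarrow> 'n pt \<times> 'n pt \<Rightarrow> real" where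
  "Dop S z = (let x = fst z; xi = snd z in
     (\<Sum>i\<in>UNIV. qc xi i * dx (ep i) S z - pc xi i * dx (eq i) S z)
     + tc xi * Es S z
     - (\<Sum>i\<in>UNIV. pc x i * pc xi i + qc x i * qc xi i) * dx et S z)"

definition ialpha :: "('n::finite pt \<times> 'n pt \<Rightarrow> real) \<Rightarrow> 'n pt \<times> 'n pt \<Rightarrow> real" where
  "ialpha S z = (let x = fst z in
     (1/2) * ((\<Sum>i\<in>UNIV. pc x i * dxi (eq i) S z - qc x i * dxi (ep i) S z) - dxi et S z))"

text \<open>X on R^k (k = degree of the argument)\<close>
definition Xop :: "real \<Rightarrow> int \<Rightarrow> ('n::finite pt \<times> 'n pt \<Rightarrow> real) \<Rightarrow> 'n pt \<times> 'n pt \<Rightarrow> real" where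
  "Xop \<delta> k S z = Dop S z + (2 * (real CARD('n) + 1) * \<delta> + real_of_int k) * tc (snd z) * S z"

text \<open>X^l on R^k: X_{k+l-1} o ... o X_{k+1} o X_k\<close>
fun Xpow :: "real \<Rightarrow> nat \<Rightarrow> int \<Rightarrow> ('n::finite pt \<times> 'n pt \<Rightarrow> real) \<Rightarrow> 'n pt \<times> 'n pt \<Rightarrow> real" where
  "Xpow \<delta> 0 k S = S"
| "Xpow \<delta> (Suc l) k S = Xop \<delta> (k + int l) (Xpow \<delta> l k S)"

definition rr :: "nat \<Rightarrow> real \<Rightarrow> nat \<Rightarrow> int \<Rightarrow> real" where
  "rr n \<delta> l k = - (real l / 2) * (2 * (real n + 1) * \<delta> + 2 * real_of_int k + real l - 1)"

end

theory Submission
  imports Defs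
begin

definition ldiff :: "('a::real_normed_vector \<Rightarrow> real) \<Rightarrow> 'a \<Rightarrow> 'a \<Rightarrow> bool" where
  "ldiff f v z \<longleftrightarrow> (\<lambda>s. f (z + s *\<^sub>R v)) differentiable (at 0)"

lemma pd_has: "ldiff f v z \<Longrightarrow> ((\<lambda>s. f (z + s *\<^sub>R v)) has_real_derivative pd v f z) (at 0)"
  unfolding pd_def ldiff_def using DERIV_deriv_iff_real_differentiable by blast

lemma pd_eqI: "((\<lambda>s. f (z + s *\<^sub>R v)) has_real_derivative D) (at 0) \<Longrightarrow> pd v f z = D"
  unfolding pd_def by (rule DERIV_imp_deriv)

lemma ldiffI: "((\<lambda>s. f (z + s *\<^sub>R v)) has_real_derivative D) (at 0) \<Longrightarrow> ldiff f v z"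
  unfolding ldiff_def using real_differentiable_def by blast

lemma pd_shift:
  assumes "\<And>y. ldiff f v y"
  shows "((\<lambda>s. f (z + s *\<^sub>R v)) has_real_derivative pd v f (z + \<sigma> *\<^sub>R v)) (at \<sigma>)"
proof -
  have "((\<lambda>h. f ((z + \<sigma> *\<^sub>R v) + h *\<^sub>R v)) has_real_derivative pd v f (z + \<sigma> *\<^sub>R v)) (at 0)"
    using pd_has[OF assms] .
  moreover have "(\<lambda>h. f ((z + \<sigma> *\<^sub>R v) + h *\<^sub>R v)) = (\<lambda>h. f (z + (h + \<sigma>) *\<^sub>R v))"
    by (simp add: algebra_simps)
  ultimately show ?thesis using DERIV_shift[of "\<lambda>s. f (z + s *\<^sub>R v)" _ 0 \<sigma>] by simp
qed

lemma ldiff_const[simp]: "ldiff (\<lambda>z. c) v z"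
  unfolding ldiff_def by simp
lemma ldiff_add[simp]: "ldiff f v z \<Longrightarrow> ldiff g v z \<Longrightarrow> ldiff (\<lambda>z. f z + g z) v z"
  unfolding ldiff_def by simp
lemma ldiff_diff[simp]: "ldiff f v z \<Longrightarrow> ldiff g v z \<Longrightarrow> ldiff (\<lambda>z. f z - g z) v z"
  unfolding ldiff_def by (simp add: differentiable_diff)
lemma ldiff_mult[simp]: "ldiff f v z \<Longrightarrow> ldiff g v z \<Longrightarrow> ldiff (\<lambda>z. f z * g z) v z"
  unfolding ldiff_def by simp
lemma ldiff_minus[simp]: "ldiff f v z \<Longrightarrow> ldiff (\<lambda>z. - f z) v z"
  unfolding ldiff_def by (simp add: differentiable_minus)
lemma ldiff_sum[simp]: "finite I \<Longrightarrow> (\<And>i. i \<in> I \<Longrightarrow> ldiff (f i) v z) \<Longrightarrow> ldiff (\<lambda>z. \<Sum>i\<in>I. f i z) v z"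
  unfolding ldiff_def by (rule differentiable_sum) auto

lemma pd_add[simp]: "ldiff f v z \<Longrightarrow> ldiff g v z \<Longrightarrow> pd v (\<lambda>z. f z + g z) z = pd v f z + pd v g z"
  by (intro pd_eqI DERIV_add pd_has)
lemma pd_diff[simp]: "ldiff f v z \<Longrightarrow> ldiff g v z \<Longrightarrow> pd v (\<lambda>z. f z - g z) z = pd v f z - pd v g z"
  by (intro pd_eqI DERIV_diff pd_has)
lemma pd_minus[simp]: "ldiff f v z \<Longrightarrow> pd v (\<lambda>z. - f z) z = - pd v f z"
  by (intro pd_eqI DERIV_minus pd_has)
lemma pd_mult[simp]: "ldiff f v z \<Longrightarrow> ldiff g v z \<Longrightarrow>
   pd v (\<lambda>z. f z * g z) z = pd v f z * g z + f z * pd v g z"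
  by (intro pd_eqI) (auto intro!: derivative_eq_intros pd_has)
lemma pd_const[simp]: "pd v (\<lambda>z. c) z = 0"
  by (intro pd_eqI) (auto intro!: derivative_eq_intros)
lemma pd_sum[simp]: "finite I \<Longrightarrow> (\<And>i. i \<in> I \<Longrightarrow> ldiff (f i) v z) \<Longrightarrow>
   pd v (\<lambda>z. \<Sum>i\<in>I. f i z) z = (\<Sum>i\<in>I. pd v (f i) z)"
  by (intro pd_eqI DERIV_sum pd_has) auto

lemma pd_cmult[simp]: "ldiff f v z \<Longrightarrow> pd v (\<lambda>z. c * f z) z = c * pd v f z"
  using pd_mult[of "\<lambda>z. c" v z f] by simp

lemma ldiff_divide[simp]: "ldiff f v z \<Longrightarrow> ldiff (\<lambda>z. f z / c) v z"
  using ldiff_mult[OF ldiff_const[of "1/c"], of f] by (simp add: field_simps)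
lemma pd_divide[simp]: "ldiff f v z \<Longrightarrow> pd v (\<lambda>z. f z / c) z = pd v f z / c"
  using pd_cmult[of f v z "1/c"] by (simp add: field_simps)

lemma pd_linear: "linear l \<Longrightarrow> pd v l z = l v"
  by (rule pd_eqI) (auto simp: linear_add linear_scale intro!: derivative_eq_intros)
lemma ldiff_linear: "linear l \<Longrightarrow> ldiff l v z"
  by (rule ldiffI) (auto simp: linear_add linear_scale intro!: derivative_eq_intros)

lemma smooth_def2: "smooth_fn f \<longleftrightarrow> (\<forall>vs. set vs \<subseteq> Basis \<longrightarrow>
      continuous_on UNIV (iter_pd vs f) \<and> (\<forall>v\<in>Basis. \<forall>z. ldiff (iter_pd vs f) v z))"
  unfolding smooth_fn_def ldiff_def by simp

lemma smooth_coind: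
  assumes "P f"
    and step: "\<And>g. P g \<Longrightarrow> continuous_on UNIV g \<and> (\<forall>v\<in>Basis. \<forall>z. ldiff g v z) \<and> (\<forall>v\<in>Basis. P (pd v g))"
  shows "smooth_fn f"
proof -
  have "set vs \<subseteq> Basis \<longrightarrow> P (iter_pd vs f)" for vs
    by (induction vs) (auto simp: assms(1) dest: step)
  then show ?thesis unfolding smooth_def2 using step by blast
qed

lemma iter_pd_snoc: "iter_pd vs (pd v f) = iter_pd (vs @ [v]) f"
  by (induction vs) auto

lemma smooth_pd: "smooth_fn f \<Longrightarrow> v \<in> Basis \<Longrightarrow> smooth_fn (pd v f)"
  unfolding smooth_def2 iter_pd_snoc by auto

lemma smooth_cont: "smooth_fn f \<Longrightarrow> continuous_on UNIV f"
  unfolding smooth_def2 by (metis empty_subsetI iter_pd.simps(1) list.set(1))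

lemma smooth_ldiff: "smooth_fn f \<Longrightarrow> v \<in> Basis \<Longrightarrow> ldiff f v z"
  unfolding smooth_def2 by (metis empty_subsetI iter_pd.simps(1) list.set(1))

lemma smooth_const: "smooth_fn (\<lambda>z::'a::euclidean_space. c)"
proof (rule smooth_coind[where P="\<lambda>g. \<exists>c. g = (\<lambda>z. c)"])
  fix g :: "'a \<Rightarrow> real" assume "\<exists>c. g = (\<lambda>z. c)"
  then obtain c where g: "g = (\<lambda>z. c)" by blast
  have "pd v g = (\<lambda>z. 0)" for v unfolding g by (simp add: fun_eq_iff)
  then show "continuous_on UNIV g \<and> (\<forall>v\<in>Basis. \<forall>z. ldiff g v z) \<and> (\<forall>v\<in>Basis. \<exists>c. pd v g = (\<lambda>z. c))"
    unfolding g by auto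
qed blast

lemma smooth_add: "smooth_fn (f::'a::euclidean_space\<Rightarrow>real) \<Longrightarrow> smooth_fn g \<Longrightarrow> smooth_fn (\<lambda>z. f z + g z)"
proof (rule smooth_coind[where P="\<lambda>h. \<exists>f g. smooth_fn f \<and> smooth_fn g \<and> h = (\<lambda>z. f z + g z)"])
  fix h :: "'a \<Rightarrow> real" assume "\<exists>f g. smooth_fn f \<and> smooth_fn g \<and> h = (\<lambda>z. f z + g z)"
  then obtain f g where fg: "smooth_fn f" "smooth_fn g" and h: "h = (\<lambda>z. f z + g z)" by blast
  have "pd v h = (\<lambda>z. pd v f z + pd v g z)" if "v \<in> Basis" for v
    unfolding h using fg that by (simp add: fun_eq_iff smooth_ldiff)
  then show "continuous_on UNIV h \<and> (\<forall>v\<in>Basis. \<forall>z. ldiff h v z) \<and>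
     (\<forall>v\<in>Basis. \<exists>f g. smooth_fn f \<and> smooth_fn g \<and> pd v h = (\<lambda>z. f z + g z))"
    using fg unfolding h by (auto simp: smooth_cont smooth_ldiff continuous_on_add intro!: smooth_pd)
qed blast

lemma smooth_cmult: "smooth_fn (f::'a::euclidean_space\<Rightarrow>real) \<Longrightarrow> smooth_fn (\<lambda>z. c * f z)"
proof (rule smooth_coind[where P="\<lambda>h. \<exists>f. smooth_fn f \<and> h = (\<lambda>z. c * f z)"])
  fix h :: "'a \<Rightarrow> real" assume "\<exists>f. smooth_fn f \<and> h = (\<lambda>z. c * f z)"
  then obtain f where fg: "smooth_fn f" and h: "h = (\<lambda>z. c * f z)" by blast
  have "pd v h = (\<lambda>z. c * pd v f z)" if "v \<in> Basis" for v
    unfolding h using fg that by (simp add: fun_eq_iff smooth_ldiff)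
  then show "continuous_on UNIV h \<and> (\<forall>v\<in>Basis. \<forall>z. ldiff h v z) \<and>
     (\<forall>v\<in>Basis. \<exists>f. smooth_fn f \<and> pd v h = (\<lambda>z. c * f z))"
    using fg unfolding h by (auto simp: smooth_cont smooth_ldiff continuous_on_mult intro!: smooth_pd)
qed blast

lemma smooth_minus: "smooth_fn f \<Longrightarrow> smooth_fn (\<lambda>z. - f z)"
  using smooth_cmult[of f "-1"] by simp

lemma smooth_diff: "smooth_fn f \<Longrightarrow> smooth_fn g \<Longrightarrow> smooth_fn (\<lambda>z. f z - g z)"
  using smooth_add[OF _ smooth_minus, of f g] by simp

lemma smooth_sum: "finite I \<Longrightarrow> (\<And>i. i \<in> I \<Longrightarrow> smooth_fn (f i)) \<Longrightarrow> smooth_fn (\<lambda>z. \<Sum>i\<in>I. f i z)"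
  by (induction I rule: finite_induct) (auto intro: smooth_const smooth_add)

lemma smooth_linmult:
  fixes l :: "'a::euclidean_space \<Rightarrow> real"
  assumes l: "linear l" and f: "smooth_fn f"
  shows "smooth_fn (\<lambda>z. l z * f z)"
proof -
  have cl: "continuous_on UNIV l"
    using l by (simp add: linear_continuous_on linear_conv_bounded_linear)
  show ?thesis
  proof (rule smooth_coind[where P="\<lambda>h. \<exists>f g. smooth_fn f \<and> smooth_fn g \<and> h = (\<lambda>z. l z * f z + g z)"])
    show "\<exists>fa g. smooth_fn fa \<and> smooth_fn g \<and> (\<lambda>z. l z * f z) = (\<lambda>z. l z * fa z + g z)"
      using f smooth_const[of 0] by (intro exI[of _ f] exI[of _ "\<lambda>z. 0"]) auto
  next
    fix h :: "'a \<Rightarrow> real" assume "\<exists>f g. smooth_fn f \<and> smooth_fn g \<and> h = (\<lambda>z. l z * f z + g z)"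
    then obtain f g where fg: "smooth_fn f" "smooth_fn g" and h: "h = (\<lambda>z. l z * f z + g z)" by blast
    have pdh: "pd v h = (\<lambda>z. l z * pd v f z + (l v * f z + pd v g z))" if "v \<in> Basis" for v
      unfolding h using fg that ldiff_linear[OF l] pd_linear[OF l]
      by (auto simp: fun_eq_iff smooth_ldiff algebra_simps)
    have A: "continuous_on UNIV h \<and> (\<forall>v\<in>Basis. \<forall>z. ldiff h v z)"
      using fg cl ldiff_linear[OF l] unfolding h
      by (auto simp: smooth_cont smooth_ldiff continuous_on_mult continuous_on_add)
    have B: "\<forall>v\<in>Basis. \<exists>f g. smooth_fn f \<and> smooth_fn g \<and> pd v h = (\<lambda>z. l z * f z + g z)"
    proof
      fix v :: 'a assume v: "v \<in> Basis"
      show "\<exists>f g. smooth_fn f \<and> smooth_fn g \<and> pd v h = (\<lambda>z. l z * f z + g z)"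
        by (rule exI[of _ "pd v f"], rule exI[of _ "\<lambda>z. l v * f z + pd v g z"])
          (use fg v pdh in \<open>auto intro!: smooth_add smooth_cmult smooth_pd\<close>)
    qed
    show "continuous_on UNIV h \<and> (\<forall>v\<in>Basis. \<forall>z. ldiff h v z) \<and>
     (\<forall>v\<in>Basis. \<exists>f g. smooth_fn f \<and> smooth_fn g \<and> pd v h = (\<lambda>z. l z * f z + g z))"
      using A B by blast
  qed
qed

inductive cf :: "('a::euclidean_space \<Rightarrow> real) \<Rightarrow> bool" where
  cf_const: "cf (\<lambda>z. c)"
| cf_lin: "linear l \<Longrightarrow> cf l"
| cf_add: "cf a \<Longrightarrow> cf b \<Longrightarrow> cf (\<lambda>z. a z + b z)"
| cf_mult: "cf a \<Longrightarrow> cf b \<Longrightarrow> cf (\<lambda>z. a z * b z)"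

lemma cf_minus: "cf a \<Longrightarrow> cf (\<lambda>z. - a z)"
  using cf_mult[OF cf_const[of "-1"]] by simp
lemma cf_diff: "cf a \<Longrightarrow> cf b \<Longrightarrow> cf (\<lambda>z. a z - b z)"
  using cf_add[OF _ cf_minus] by simp
lemma cf_sum: "finite I \<Longrightarrow> (\<And>i. i \<in> I \<Longrightarrow> cf (a i)) \<Longrightarrow> cf (\<lambda>z. \<Sum>i\<in>I. a i z)"
  by (induction I rule: finite_induct) (auto intro: cf_const cf_add)

lemma cf_smooth_mult: "cf a \<Longrightarrow> smooth_fn f \<Longrightarrow> smooth_fn (\<lambda>z. a z * f z)"
proof (induction a arbitrary: f rule: cf.induct)
  case (cf_const c) then show ?case by (rule smooth_cmult)
next
  case (cf_lin l) then show ?case by (rule smooth_linmult)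
next
  case (cf_add a b) then show ?case using smooth_add[of "\<lambda>z. a z * f z" "\<lambda>z. b z * f z"]
    by (simp add: distrib_right)
next
  case (cf_mult a b) then show ?case using cf_mult.IH(1)[OF cf_mult.IH(2)[OF cf_mult.prems]]
    by (simp add: mult.assoc)
qed

lemma cf_smooth: "cf a \<Longrightarrow> smooth_fn a"
  using cf_smooth_mult[OF _ smooth_const[of 1]] by simp

lemma cf_ldiff: "cf a \<Longrightarrow> ldiff a v z"
  by (induction a rule: cf.induct) (auto intro: ldiff_linear)

lemma mvt_square:
  fixes f :: "'a::euclidean_space \<Rightarrow> real"
  assumes sm: "smooth_fn f" and v: "v \<in> Basis" and w: "w \<in> Basis" and t: "t > 0"
  shows "\<exists>\<sigma> \<tau>. 0 < \<sigma> \<and> \<sigma> < t \<and> 0 < \<tau> \<and> \<tau> < t \<and>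
    f (z + t *\<^sub>R w + t *\<^sub>R v) - f (z + t *\<^sub>R w) - f (z + t *\<^sub>R v) + f z
      = t * t * pd v (pd w f) (z + \<sigma> *\<^sub>R w + \<tau> *\<^sub>R v)"
proof -
  have dw: "\<And>y. ldiff f w y" using sm w by (simp add: smooth_ldiff)
  have dvw: "\<And>y. ldiff (pd w f) v y" using sm v w by (simp add: smooth_ldiff smooth_pd)
  define \<phi> where "\<phi> s = f ((z + t *\<^sub>R v) + s *\<^sub>R w) - f (z + s *\<^sub>R w)" for s
  have "(\<phi> has_real_derivative (pd w f ((z + t *\<^sub>R v) + s *\<^sub>R w) - pd w f (z + s *\<^sub>R w))) (at s)" for s
    unfolding \<phi>_def by (intro DERIV_diff pd_shift dw)
  then obtain \<sigma> where \<sigma>: "0 < \<sigma>" "\<sigma> < t"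
    "\<phi> t - \<phi> 0 = (t - 0) * (pd w f ((z + t *\<^sub>R v) + \<sigma> *\<^sub>R w) - pd w f (z + \<sigma> *\<^sub>R w))"
    using MVT2[OF t, of \<phi> "\<lambda>s. pd w f ((z + t *\<^sub>R v) + s *\<^sub>R w) - pd w f (z + s *\<^sub>R w)"] by blast
  define \<psi> where "\<psi> u = pd w f ((z + \<sigma> *\<^sub>R w) + u *\<^sub>R v)" for u
  have "(\<psi> has_real_derivative pd v (pd w f) ((z + \<sigma> *\<^sub>R w) + u *\<^sub>R v)) (at u)" for u
    unfolding \<psi>_def by (intro pd_shift dvw)
  then obtain \<tau> where \<tau>: "0 < \<tau>" "\<tau> < t"
    "\<psi> t - \<psi> 0 = (t - 0) * pd v (pd w f) ((z + \<sigma> *\<^sub>R w) + \<tau> *\<^sub>R v)"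
    using MVT2[OF t, of \<psi> "\<lambda>u. pd v (pd w f) ((z + \<sigma> *\<^sub>R w) + u *\<^sub>R v)"] by blast
  have "f (z + t *\<^sub>R w + t *\<^sub>R v) - f (z + t *\<^sub>R w) - f (z + t *\<^sub>R v) + f z = \<phi> t - \<phi> 0"
    unfolding \<phi>_def by (simp add: algebra_simps)
  also have "\<dots> = t * (\<psi> t - \<psi> 0)"
    unfolding \<sigma>(3) \<psi>_def by (simp add: algebra_simps)
  also have "\<dots> = t * t * pd v (pd w f) (z + \<sigma> *\<^sub>R w + \<tau> *\<^sub>R v)"
    unfolding \<tau>(3) by simp
  finally show ?thesis using \<sigma> \<tau> by blast
qed

lemma abs_aux: "\<bar>(x::real) - y\<bar> < e \<Longrightarrow> \<bar>x' - y'\<bar> < e \<Longrightarrow> x = x' \<Longrightarrow> e = \<bar>y - y'\<bar> / 3 \<Longrightarrow> False"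
  by (simp add: abs_less_iff abs_if split: if_splits)

lemma clairaut:
  fixes f :: "'a::euclidean_space \<Rightarrow> real"
  assumes sm: "smooth_fn f" and v: "v \<in> Basis" and w: "w \<in> Basis"
  shows "pd v (pd w f) z = pd w (pd v f) z"
proof (rule ccontr)
  let ?G1 = "pd v (pd w f)" and ?G2 = "pd w (pd v f)"
  assume ne: "?G1 z \<noteq> ?G2 z"
  define e where "e = \<bar>?G1 z - ?G2 z\<bar> / 3"
  have e: "e > 0" using ne by (simp add: e_def)
  have c1: "continuous_on UNIV ?G1" using sm v w by (intro smooth_cont smooth_pd)
  have c2: "continuous_on UNIV ?G2" using sm v w by (intro smooth_cont smooth_pd)
  obtain d1 where d1: "d1 > 0" "\<And>y. dist y z < d1 \<Longrightarrow> dist (?G1 y) (?G1 z) < e"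
    using c1 e unfolding continuous_on_iff by (meson UNIV_I)
  obtain d2 where d2: "d2 > 0" "\<And>y. dist y z < d2 \<Longrightarrow> dist (?G2 y) (?G2 z) < e"
    using c2 e unfolding continuous_on_iff by (meson UNIV_I)
  define t where "t = min d1 d2 / 4"
  have t: "t > 0" using d1 d2 by (simp add: t_def)
  obtain \<sigma> \<tau> where st: "0 < \<sigma>" "\<sigma> < t" "0 < \<tau>" "\<tau> < t"
    "f (z + t *\<^sub>R w + t *\<^sub>R v) - f (z + t *\<^sub>R w) - f (z + t *\<^sub>R v) + f z
      = t * t * ?G1 (z + \<sigma> *\<^sub>R w + \<tau> *\<^sub>R v)"
    using mvt_square[OF sm v w t] by blast
  obtain \<sigma>' \<tau>' where st': "0 < \<sigma>'" "\<sigma>' < t" "0 < \<tau>'" "\<tau>' < t"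
    "f (z + t *\<^sub>R v + t *\<^sub>R w) - f (z + t *\<^sub>R v) - f (z + t *\<^sub>R w) + f z
      = t * t * ?G2 (z + \<sigma>' *\<^sub>R v + \<tau>' *\<^sub>R w)"
    using mvt_square[OF sm w v t] by blast
  have eq: "?G1 (z + \<sigma> *\<^sub>R w + \<tau> *\<^sub>R v) = ?G2 (z + \<sigma>' *\<^sub>R v + \<tau>' *\<^sub>R w)"
    using st(5) st'(5) t by (simp add: algebra_simps)
  have nv: "norm v = 1" "norm w = 1" using v w by auto
  have "dist (z + \<sigma> *\<^sub>R w + \<tau> *\<^sub>R v) z \<le> \<sigma> + \<tau>"
    using norm_triangle_ineq[of "\<sigma> *\<^sub>R w" "\<tau> *\<^sub>R v"] st nv by (simp add: dist_norm)
  then have "dist (?G1 (z + \<sigma> *\<^sub>R w + \<tau> *\<^sub>R v)) (?G1 z) < e"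
    using st d1 d2 by (intro d1(2)) (simp add: t_def)
  moreover have "dist (z + \<sigma>' *\<^sub>R v + \<tau>' *\<^sub>R w) z \<le> \<sigma>' + \<tau>'"
    using norm_triangle_ineq[of "\<sigma>' *\<^sub>R v" "\<tau>' *\<^sub>R w"] st' nv by (simp add: dist_norm)
  then have "dist (?G2 (z + \<sigma>' *\<^sub>R v + \<tau>' *\<^sub>R w)) (?G2 z) < e"
    using st' d1 d2 by (intro d2(2)) (simp add: t_def)
  ultimately show False using eq e_def unfolding dist_real_def
    using abs_aux by metis
qed

definition vf :: "'i set \<Rightarrow> ('i \<Rightarrow> 'a \<Rightarrow> real) \<Rightarrow> ('i \<Rightarrow> 'a) \<Rightarrow> ('a::real_normed_vector \<Rightarrow> real) \<Rightarrow> 'a \<Rightarrow> real" where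
  "vf I a u T z = (\<Sum>j\<in>I. a j z * pd (u j) T z)"

lemma vf_add:
  assumes "finite I" "\<And>j. j \<in> I \<Longrightarrow> ldiff f (u j) z" "\<And>j. j \<in> I \<Longrightarrow> ldiff g (u j) z"
  shows "vf I a u (\<lambda>z. f z + g z) z = vf I a u f z + vf I a u g z"
  unfolding vf_def using assms by (simp add: distrib_left sum.distrib)

lemma vf_cmult:
  assumes "\<And>j. j \<in> I \<Longrightarrow> ldiff f (u j) z"
  shows "vf I a u (\<lambda>z. c * f z) z = c * vf I a u f z"
  unfolding vf_def using assms by (simp add: sum_distrib_left algebra_simps)

lemma vf_mult:
  assumes "\<And>j. j \<in> I \<Longrightarrow> ldiff f (u j) z" "\<And>j. j \<in> I \<Longrightarrow> ldiff g (u j) z"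
  shows "vf I a u (\<lambda>z. f z * g z) z = f z * vf I a u g z + vf I a u f z * g z"
  unfolding vf_def using assms by (simp add: sum_distrib_left sum_distrib_right sum.distrib algebra_simps)

lemma vf_ldiff:
  assumes "finite J" "\<And>k. k \<in> J \<Longrightarrow> ldiff (b k) v z" "\<And>k. k \<in> J \<Longrightarrow> ldiff (pd (w k) T) v z"
  shows "ldiff (vf J b w T) v z"
proof -
  have "ldiff (\<lambda>z. \<Sum>k\<in>J. b k z * pd (w k) T z) v z"
    using assms by (intro ldiff_sum ldiff_mult) auto
  then show ?thesis unfolding vf_def[abs_def] by simp
qed

lemma vf_comm:
  fixes T :: "'a::euclidean_space \<Rightarrow> real"
  assumes I: "finite I" and J: "finite J" and T: "smooth_fn T"
    and u: "\<And>j. j \<in> I \<Longrightarrow> u j \<in> Basis" and w: "\<And>k. k \<in> J \<Longrightarrow> w k \<in> Basis"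
    and db: "\<And>j k. j \<in> I \<Longrightarrow> k \<in> J \<Longrightarrow> ldiff (b k) (u j) z"
    and da: "\<And>j k. j \<in> I \<Longrightarrow> k \<in> J \<Longrightarrow> ldiff (a j) (w k) z"
  shows "vf I a u (vf J b w T) z - vf J b w (vf I a u T) z
     = (\<Sum>k\<in>J. vf I a u (b k) z * pd (w k) T z) - (\<Sum>j\<in>I. vf J b w (a j) z * pd (u j) T z)"
proof -
  have dT: "ldiff (pd (w k) T) (u j) z" "ldiff (pd (u j) T) (w k) z"
     "ldiff T (w k) z" "ldiff T (u j) z" if "j \<in> I" "k \<in> J" for j k
    using that u w T by (auto intro!: smooth_ldiff smooth_pd)
  have cl: "pd (w k) (pd (u j) T) z = pd (u j) (pd (w k) T) z" if "j \<in> I" "k \<in> J" for j k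
    using that u w T clairaut by metis
  have L: "pd (u j) (vf J b w T) z = (\<Sum>k\<in>J. pd (u j) (b k) z * pd (w k) T z + b k z * pd (u j) (pd (w k) T) z)"
    if j: "j \<in> I" for j
  proof -
    have "pd (u j) (vf J b w T) z = pd (u j) (\<lambda>z. \<Sum>k\<in>J. b k z * pd (w k) T z) z"
      unfolding vf_def[abs_def] by simp
    also have "\<dots> = (\<Sum>k\<in>J. pd (u j) (\<lambda>z. b k z * pd (w k) T z) z)"
      using J db dT j by (intro pd_sum) auto
    also have "\<dots> = (\<Sum>k\<in>J. pd (u j) (b k) z * pd (w k) T z + b k z * pd (u j) (pd (w k) T) z)"
      using db dT j by (intro sum.cong refl pd_mult) auto
    finally show ?thesis .
  qed
  have R: "pd (w k) (vf I a u T) z = (\<Sum>j\<in>I. pd (w k) (a j) z * pd (u j) T z + a j z * pd (u j) (pd (w k) T) z)"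
    if k: "k \<in> J" for k
  proof -
    have "pd (w k) (vf I a u T) z = pd (w k) (\<lambda>z. \<Sum>j\<in>I. a j z * pd (u j) T z) z"
      unfolding vf_def[abs_def] by simp
    also have "\<dots> = (\<Sum>j\<in>I. pd (w k) (\<lambda>z. a j z * pd (u j) T z) z)"
      using I da dT k by (intro pd_sum) auto
    also have "\<dots> = (\<Sum>j\<in>I. pd (w k) (a j) z * pd (u j) T z + a j z * pd (w k) (pd (u j) T) z)"
      using da dT k by (intro sum.cong refl pd_mult) auto
    also have "\<dots> = (\<Sum>j\<in>I. pd (w k) (a j) z * pd (u j) T z + a j z * pd (u j) (pd (w k) T) z)"
      using cl k by (intro sum.cong refl) auto
    finally show ?thesis .
  qed
  have "vf I a u (vf J b w T) z = (\<Sum>j\<in>I. \<Sum>k\<in>J. a j z * (pd (u j) (b k) z * pd (w k) T z) + a j z * (b k z * pd (u j) (pd (w k) T) z))"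
    unfolding vf_def[of I a u] using L by (simp add: sum_distrib_left distrib_left)
  moreover have "vf J b w (vf I a u T) z = (\<Sum>k\<in>J. \<Sum>j\<in>I. b k z * (pd (w k) (a j) z * pd (u j) T z) + b k z * (a j z * pd (u j) (pd (w k) T) z))"
    unfolding vf_def[of J b w] using R by (simp add: sum_distrib_left distrib_left)
  moreover have "(\<Sum>k\<in>J. vf I a u (b k) z * pd (w k) T z) = (\<Sum>j\<in>I. \<Sum>k\<in>J. a j z * (pd (u j) (b k) z * pd (w k) T z))"
    unfolding vf_def by (simp add: sum_distrib_right mult.assoc sum.swap[of _ J I])
  moreover have "(\<Sum>j\<in>I. vf J b w (a j) z * pd (u j) T z) = (\<Sum>k\<in>J. \<Sum>j\<in>I. b k z * (pd (w k) (a j) z * pd (u j) T z))"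
    unfolding vf_def by (simp add: sum_distrib_right mult.assoc sum.swap[of _ I J])
  moreover have "(\<Sum>j\<in>I. \<Sum>k\<in>J. a j z * (b k z * pd (u j) (pd (w k) T) z)) = (\<Sum>k\<in>J. \<Sum>j\<in>I. b k z * (a j z * pd (u j) (pd (w k) T) z))"
    by (subst sum.swap) (simp add: algebra_simps)
  ultimately show ?thesis by (simp add: sum.distrib sum.swap[of _ I J])
qed

section \<open>Concrete coordinates\<close>

definition cq :: "'n::finite \<Rightarrow> 'n pt \<times> 'n pt \<Rightarrow> real" where "cq i z = qc (fst z) i"
definition cp :: "'n::finite \<Rightarrow> 'n pt \<times> 'n pt \<Rightarrow> real" where "cp i z = pc (fst z) i"
definition xq :: "'n::finite \<Rightarrow> 'n pt \<times> 'n pt \<Rightarrow> real" where "xq i z = qc (snd z) i"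
definition xp :: "'n::finite \<Rightarrow> 'n pt \<times> 'n pt \<Rightarrow> real" where "xp i z = pc (snd z) i"
definition xt :: "'n::finite pt \<times> 'n pt \<Rightarrow> real" where "xt z = tc (snd z)"

definition QX :: "'n::finite \<Rightarrow> 'n pt \<times> 'n pt" where "QX i = (eq i, 0)"
definition PX :: "'n::finite \<Rightarrow> 'n pt \<times> 'n pt" where "PX i = (ep i, 0)"
definition TX :: "'n::finite pt \<times> 'n pt" where "TX = (et, 0)"
definition QXi :: "'n::finite \<Rightarrow> 'n pt \<times> 'n pt" where "QXi i = (0, eq i)"
definition PXi :: "'n::finite \<Rightarrow> 'n pt \<times> 'n pt" where "PXi i = (0, ep i)"
definition TXi :: "'n::finite pt \<times> 'n pt" where "TXi = (0, et)"

lemmas coord_defs = cq_def cp_def xq_def xp_def xt_def qc_def pc_def tc_def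
lemmas dir_defs = QX_def PX_def TX_def QXi_def PXi_def TXi_def eq_def ep_def et_def

lemma lin_coords: "linear (cq i)" "linear (cp i)" "linear (xq i)" "linear (xp i)" "linear xt"
  by (auto intro!: linearI simp: coord_defs)

lemma ldiff_coords[simp]: "ldiff (cq i) v z" "ldiff (cp i) v z" "ldiff (xq i) v z" "ldiff (xp i) v z" "ldiff xt v z"
  by (rule ldiff_linear, rule lin_coords)+

lemma pd_coords[simp]: "pd v (cq i) z = cq i v" "pd v (cp i) z = cp i v" "pd v (xq i) z = xq i v"
   "pd v (xp i) z = xp i v" "pd v xt z = xt v"
  by (rule pd_linear, rule lin_coords)+

lemma coord_dirs[simp]:
  "cq i (QX j) = (if i = j then 1 else 0)" "cq i (PX j) = 0" "cq i TX = 0" "cq i (QXi j) = 0" "cq i (PXi j) = 0" "cq i TXi = 0"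
  "cp i (QX j) = 0" "cp i (PX j) = (if i = j then 1 else 0)" "cp i TX = 0" "cp i (QXi j) = 0" "cp i (PXi j) = 0" "cp i TXi = 0"
  "xq i (QX j) = 0" "xq i (PX j) = 0" "xq i TX = 0" "xq i (QXi j) = (if i = j then 1 else 0)" "xq i (PXi j) = 0" "xq i TXi = 0"
  "xp i (QX j) = 0" "xp i (PX j) = 0" "xp i TX = 0" "xp i (QXi j) = 0" "xp i (PXi j) = (if i = j then 1 else 0)" "xp i TXi = 0"
  "xt (QX j) = 0" "xt (PX j) = 0" "xt TX = 0" "xt (QXi j) = 0" "xt (PXi j) = 0" "xt TXi = 1"
  by (auto simp: coord_defs dir_defs axis_def)

lemma b1: "u \<in> Basis \<Longrightarrow> (u, 0) \<in> (Basis :: ('c::euclidean_space \<times> 'd::euclidean_space) set)"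
  by (auto simp: Basis_prod_def)
lemma b2: "u \<in> Basis \<Longrightarrow> (0, u) \<in> (Basis :: ('c::euclidean_space \<times> 'd::euclidean_space) set)"
  by (auto simp: Basis_prod_def)

lemma dirs_Basis[simp]: "QX i \<in> Basis" "PX i \<in> Basis" "TX \<in> Basis" "QXi i \<in> Basis" "PXi i \<in> Basis" "TXi \<in> Basis"
proof -
  have ax: "axis i (1::real) \<in> Basis" for i :: 'a by simp
  show "QX i \<in> Basis" "PX i \<in> Basis" "TX \<in> Basis" "QXi i \<in> Basis" "PXi i \<in> Basis" "TXi \<in> Basis"
    unfolding dir_defs by (auto simp: Basis_prod_def image_iff zero_prod_def)
qed

definition I3 :: "('n::finite option \<times> nat) set" where
  "I3 = UNIV \<times> {0, Suc 0, Suc (Suc 0)}"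

lemma finite_I3[simp]: "finite I3" by (simp add: I3_def)

lemma sum_I3: "sum f I3 = f (None, 0) + f (None, Suc 0) + f (None, Suc (Suc 0)) +
   (\<Sum>i\<in>UNIV. f (Some i, 0) + f (Some i, Suc 0) + f (Some i, Suc (Suc 0)))"
proof -
  have "sum f I3 = (\<Sum>y\<in>UNIV. \<Sum>c\<in>{0, Suc 0, Suc (Suc 0)}. f (y, c))"
    unfolding I3_def using sum.cartesian_product[of "\<lambda>x y. f (x, y)" "{0, Suc 0, Suc (Suc 0)}" UNIV]
    by (simp add: case_prod_unfold)
  also have "\<dots> = (\<Sum>c\<in>{0, Suc 0, Suc (Suc 0)}. f (None, c)) + (\<Sum>i\<in>UNIV. \<Sum>c\<in>{0, Suc 0, Suc (Suc 0)}. f (Some i, c))"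
    by (simp add: UNIV_option_conv sum.reindex)
  finally show ?thesis by (simp add: add.assoc)
qed

fun aD :: "'n::finite option \<times> nat \<Rightarrow> 'n pt \<times> 'n pt \<Rightarrow> real" where
  "aD (Some i, 0) = (\<lambda>z. xq i z + xt z * cp i z)"
| "aD (Some i, Suc 0) = (\<lambda>z. xt z * cq i z - xp i z)"
| "aD (Some i, Suc (Suc 0)) = (\<lambda>z. - (cp i z * xp i z + cq i z * xq i z))"
| "aD _ = (\<lambda>z. 0)"

fun uD :: "'n::finite option \<times> nat \<Rightarrow> 'n pt \<times> 'n pt" where
  "uD (Some i, 0) = PX i"
| "uD (Some i, Suc 0) = QX i"
| "uD _ = TX"

fun aA :: "'n::finite option \<times> nat \<Rightarrow> 'n pt \<times> 'n pt \<Rightarrow> real" where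
  "aA (Some i, 0) = (\<lambda>z. cp i z / 2)"
| "aA (Some i, Suc 0) = (\<lambda>z. - (cq i z / 2))"
| "aA (None, 0) = (\<lambda>z. - (1 / 2))"
| "aA _ = (\<lambda>z. 0)"

fun aE :: "'n::finite option \<times> nat \<Rightarrow> 'n pt \<times> 'n pt \<Rightarrow> real" where
  "aE (Some i, 0) = xq i"
| "aE (Some i, Suc 0) = xp i"
| "aE (None, 0) = xt"
| "aE _ = (\<lambda>z. 0)"

fun uA :: "'n::finite option \<times> nat \<Rightarrow> 'n pt \<times> 'n pt" where
  "uA (Some i, 0) = QXi i"
| "uA (Some i, Suc 0) = PXi i"
| "uA _ = TXi"

lemma uD_Basis[simp]: "uD j \<in> Basis" by (cases j rule: uD.cases) auto
lemma uA_Basis[simp]: "uA j \<in> Basis" by (cases j rule: uA.cases) auto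

lemma cf_coords[simp]: "cf (cq i)" "cf (cp i)" "cf (xq i)" "cf (xp i)" "cf xt"
  by (rule cf_lin, rule lin_coords)+

lemma cf_aD[simp]: "cf (aD j)"
  by (cases j rule: aD.cases) (auto intro!: cf_add cf_mult cf_diff cf_minus cf_const)
lemma cf_aA[simp]: "cf (aA j)"
proof -
  have "cf (\<lambda>z. cp i z / 2)" "cf (\<lambda>z. - (cq i z / 2))" for i :: 'a
    using cf_mult[OF cf_const[of "1/2"] cf_coords(2)[of i]] cf_mult[OF cf_const[of "-1/2"] cf_coords(1)[of i]]
    by (auto simp: mult.commute)
  then show ?thesis by (cases j rule: aA.cases) (auto intro: cf_const)
qed
lemma cf_aE[simp]: "cf (aE j)"
  by (cases j rule: aE.cases) (auto intro: cf_const)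

definition Eop :: "('n::finite pt \<times> 'n pt \<Rightarrow> real) \<Rightarrow> 'n pt \<times> 'n pt \<Rightarrow> real" where
  "Eop T = vf I3 aE uA T"

lemma Dop_vf: "Dop T z = vf I3 aD uD T z"
  unfolding Dop_def Es_def vf_def sum_I3 dx_def
  by (simp add: coord_defs[symmetric] dir_defs[symmetric] QX_def[symmetric] PX_def[symmetric] TX_def[symmetric]
      Let_def algebra_simps sum.distrib sum_subtractf sum_distrib_left sum_distrib_right)

lemma ialpha_vf: "ialpha T z = vf I3 aA uA T z"
  unfolding ialpha_def vf_def sum_I3 dxi_def
  by (simp add: coord_defs[symmetric] QXi_def[symmetric] PXi_def[symmetric] TXi_def[symmetric]
      Let_def algebra_simps sum.distrib sum_subtractf sum_distrib_left sum_distrib_right)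

lemma ldiff_cf[simp]: "ldiff (aD j) v z" "ldiff (aA j) v z" "ldiff (aE j) v z"
  by (simp_all add: cf_ldiff)

lemma delta_simps:
  "(x::real) * (if P then 1 else 0) = (if P then x else 0)"
  "(if P then 1 else 0) * x = (if P then x else 0)"
  "(if P then x else 0) * y = (if P then x * y else 0)"
  "y * (if P then x else 0) = (if P then y * x else 0)"
  "(if P then x else 0) / c = (if P then x / c else 0)"
  "- (if P then x else 0) = (if P then - x else 0)"
  by auto

lemmas calc_simps = vf_def sum_I3 delta_simps sum.distrib sum_subtractf sum_negf

lemma L1: "vf I3 aA uA (aD k) z = 0"
  by (cases k rule: aD.cases) (simp_all add: calc_simps)

fun hAD :: "'n::finite option \<times> nat \<Rightarrow> 'n pt \<times> 'n pt \<Rightarrow> real" where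
  "hAD (Some i, 0) = (\<lambda>z. (xq i z + xt z * cp i z) / 2)"
| "hAD (Some i, Suc 0) = (\<lambda>z. - (xt z * cq i z - xp i z) / 2)"
| "hAD _ = (\<lambda>z. 0)"

lemma L2: "vf I3 aD uD (aA j) z = hAD j z"
  by (cases j rule: aA.cases) (simp_all add: calc_simps, simp add: field_simps)
lemma L3: "vf I3 aE uA (aD k) z = aD k z"
  by (cases k rule: aD.cases) (simp_all add: calc_simps algebra_simps)
lemma L4: "vf I3 aD uD (aE j) z = 0"
  by (cases j rule: aE.cases) (simp_all add: calc_simps)
lemma L5: "vf I3 aE uA (aA j) z = 0"
  by (cases j rule: aA.cases) (simp_all add: calc_simps)
lemma L6: "vf I3 aA uA (aE j) z = aA j z"
  by (cases j rule: aE.cases) (simp_all add: calc_simps)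
lemma L7: "vf I3 aA uA xt z = - 1 / 2" "vf I3 aE uA xt z = xt z" "vf I3 aD uD xt z = 0"
  by (simp_all add: calc_simps)

lemma smooth_vf:
  assumes "finite I" "\<And>j. j \<in> I \<Longrightarrow> cf (a j)" "\<And>j. j \<in> I \<Longrightarrow> u j \<in> Basis" "smooth_fn T"
  shows "smooth_fn (vf I a u T)"
proof -
  have "smooth_fn (\<lambda>z. \<Sum>j\<in>I. a j z * pd (u j) T z)"
    using assms by (intro smooth_sum cf_smooth_mult smooth_pd) auto
  then show ?thesis unfolding vf_def[abs_def] .
qed

lemma smooth_vf3[simp]: "smooth_fn T \<Longrightarrow> smooth_fn (vf I3 aD uD T)" "smooth_fn T \<Longrightarrow> smooth_fn (vf I3 aA uA T)"
   "smooth_fn T \<Longrightarrow> smooth_fn (vf I3 aE uA T)"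
  by (auto intro: smooth_vf)

lemma smooth_X: "smooth_fn T \<Longrightarrow> smooth_fn (\<lambda>z. vf I3 aD uD T z + c * xt z * T z)"
  by (intro smooth_add smooth_vf3 cf_smooth_mult cf_mult cf_const cf_coords)

lemma smooth_ld[simp]: "smooth_fn T \<Longrightarrow> ldiff T (uD j) z" "smooth_fn T \<Longrightarrow> ldiff T (uA j) z"
  by (auto intro: smooth_ldiff)

lemma K1:
  assumes T: "smooth_fn T"
  shows "vf I3 aA uA (\<lambda>z. vf I3 aD uD T z + c * xt z * T z) z
     - (vf I3 aD uD (vf I3 aA uA T) z + (c - 1) * xt z * vf I3 aA uA T z)
     = -(1/2) * vf I3 aE uA T z - c / 2 * T z"
proof -
  have s1: "smooth_fn (vf I3 aD uD T)" using T by simp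
  have a1: "vf I3 aA uA (\<lambda>z. vf I3 aD uD T z + c * xt z * T z) z
      = vf I3 aA uA (vf I3 aD uD T) z + vf I3 aA uA (\<lambda>z. (c * xt z) * T z) z"
    using s1 T by (intro vf_add) auto
  have a2: "vf I3 aA uA (\<lambda>z. (c * xt z) * T z) z = c * xt z * vf I3 aA uA T z + c * (- 1 / 2) * T z"
    using T vf_mult[of I3 "\<lambda>z. c * xt z" uA z T aA] vf_cmult[of I3 xt uA z aA c] L7(1)[of z] by simp
  have a3: "vf I3 aA uA (vf I3 aD uD T) z - vf I3 aD uD (vf I3 aA uA T) z
      = (\<Sum>k\<in>I3. vf I3 aA uA (aD k) z * pd (uD k) T z) - (\<Sum>j\<in>I3. vf I3 aD uD (aA j) z * pd (uA j) T z)"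
    using T by (intro vf_comm) auto
  have key: "xt z * aA j z - hAD j z = -(1/2) * aE j z" for j
    by (cases j rule: aA.cases) (auto simp: field_simps)
  have a4: "xt z * vf I3 aA uA T z - (\<Sum>j\<in>I3. hAD j z * pd (uA j) T z) = -(1/2) * vf I3 aE uA T z"
  proof -
    have "xt z * vf I3 aA uA T z - (\<Sum>j\<in>I3. hAD j z * pd (uA j) T z)
        = (\<Sum>j\<in>I3. (xt z * aA j z - hAD j z) * pd (uA j) T z)"
      unfolding vf_def by (simp add: sum_distrib_left sum_subtractf[symmetric] algebra_simps)
    also have "\<dots> = (\<Sum>j\<in>I3. -(1/2) * (aE j z * pd (uA j) T z))"
      by (simp add: key)
    finally show ?thesis unfolding vf_def by (simp add: sum_distrib_left)
  qed
  show ?thesis using a1 a2 a3 a4 by (simp add: L1 L2 algebra_simps)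
qed

lemma K2:
  assumes T: "smooth_fn T" and E: "\<And>z. vf I3 aE uA T z = m * T z"
  shows "vf I3 aE uA (\<lambda>z. vf I3 aD uD T z + c * xt z * T z) z = (m + 1) * (vf I3 aD uD T z + c * xt z * T z)"
proof -
  have s1: "smooth_fn (vf I3 aD uD T)" using T by simp
  have a1: "vf I3 aE uA (\<lambda>z. vf I3 aD uD T z + c * xt z * T z) z
      = vf I3 aE uA (vf I3 aD uD T) z + vf I3 aE uA (\<lambda>z. (c * xt z) * T z) z"
    using s1 T by (intro vf_add) auto
  have a2: "vf I3 aE uA (\<lambda>z. (c * xt z) * T z) z = c * xt z * vf I3 aE uA T z + c * xt z * T z"
    using T vf_mult[of I3 "\<lambda>z. c * xt z" uA z T aE] vf_cmult[of I3 xt uA z aE c] L7(2)[of z] by simp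
  have a3: "vf I3 aE uA (vf I3 aD uD T) z - vf I3 aD uD (vf I3 aE uA T) z
      = (\<Sum>k\<in>I3. vf I3 aE uA (aD k) z * pd (uD k) T z) - (\<Sum>j\<in>I3. vf I3 aD uD (aE j) z * pd (uA j) T z)"
    using T by (intro vf_comm) auto
  have ET: "vf I3 aE uA T = (\<lambda>z. m * T z)" using E by auto
  have a4: "vf I3 aD uD (vf I3 aE uA T) z = m * vf I3 aD uD T z"
    unfolding ET using T by (intro vf_cmult) auto
  show ?thesis using a1 a2 a3 a4 E[of z] by (simp add: L3 L4 vf_def[symmetric] algebra_simps)
qed

lemma K3:
  assumes T: "smooth_fn T" and E: "\<And>z. vf I3 aE uA T z = m * T z"
  shows "vf I3 aE uA (vf I3 aA uA T) z = (m - 1) * vf I3 aA uA T z"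
proof -
  have a3: "vf I3 aE uA (vf I3 aA uA T) z - vf I3 aA uA (vf I3 aE uA T) z
      = (\<Sum>k\<in>I3. vf I3 aE uA (aA k) z * pd (uA k) T z) - (\<Sum>j\<in>I3. vf I3 aA uA (aE j) z * pd (uA j) T z)"
    using T by (intro vf_comm) auto
  have ET: "vf I3 aE uA T = (\<lambda>z. m * T z)" using E by auto
  have a4: "vf I3 aA uA (vf I3 aE uA T) z = m * vf I3 aA uA T z"
    unfolding ET using T by (intro vf_cmult) auto
  show ?thesis using a3 a4 by (simp add: L5 L6 vf_def[symmetric] algebra_simps)
qed

lemma basis_exp_R: "(\<Sum>i\<in>UNIV. ((q::real^'n)$i) *\<^sub>R axis i (1::real)) = q"
  by (simp add: vec_eq_iff axis_def delta_simps)

lemma mono_diff: "(\<lambda>\<xi>::'a::euclidean_space. \<Prod>b\<in>B. (\<xi> \<bullet> b)^(n b)) differentiable (at x)"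
  by (rule differentiableI, rule has_derivative_prod, rule has_derivative_power, rule has_derivative_inner_left, rule has_derivative_ident)

lemma euler_hom:
  fixes S :: "'n::finite pt \<times> 'n pt \<Rightarrow> real"
  assumes hp: "hom_poly_xi m S"
  shows "vf I3 aE uA S z = real m * S z"
proof -
  obtain c where c: "\<And>x xi. S (x, xi) = (\<Sum>a\<in>multi_idx m. c a x * (\<Prod>b\<in>Basis. (xi \<bullet> b) ^ a b))"
    using hp unfolding hom_poly_xi_def by blast
  obtain x \<xi> where z: "z = (x, \<xi>)" by (cases z)
  define g where "g \<xi>' = S (x, \<xi>')" for \<xi>'
  have g_eq: "g = (\<lambda>\<xi>'. \<Sum>a\<in>multi_idx m. c a x * (\<Prod>b\<in>Basis. (\<xi>' \<bullet> b) ^ a b))"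
    unfolding g_def by (simp add: c fun_eq_iff)
  have gd: "g differentiable (at \<xi>)"
  proof (cases "finite (multi_idx m :: ('n pt \<Rightarrow> nat) set)")
    case True
    show ?thesis unfolding g_eq using True
      by (intro differentiable_sum ballI differentiable_mult differentiable_const mono_diff)
  next
    case False
    then show ?thesis unfolding g_eq by simp
  qed
  then obtain D where D: "(g has_derivative D) (at \<xi>)" unfolding differentiable_def by blast
  have lin: "linear D" using D has_derivative_linear by blast
  have line: "((\<lambda>s. g (\<xi> + s *\<^sub>R v)) has_real_derivative D v) (at 0)" for v
  proof -
    have "((\<lambda>s::real. \<xi> + s *\<^sub>R v) has_derivative (\<lambda>s. s *\<^sub>R v)) (at 0)"
      by (auto intro!: derivative_eq_intros)
    moreover have "(g has_derivative D) (at ((\<lambda>s::real. \<xi> + s *\<^sub>R v) 0))" using D by simp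
    ultimately have "((\<lambda>s. g (\<xi> + s *\<^sub>R v)) has_derivative (\<lambda>s. D (s *\<^sub>R v))) (at 0)"
      by (rule has_derivative_compose)
    moreover have "(\<lambda>s. D (s *\<^sub>R v)) = (*) (D v)"
      using lin by (auto simp: fun_eq_iff linear_scale)
    ultimately show ?thesis unfolding has_field_derivative_def by simp
  qed
  have pdD: "pd (0, v) S z = D v" for v
  proof -
    have "(\<lambda>s. S (z + s *\<^sub>R (0, v))) = (\<lambda>s. g (\<xi> + s *\<^sub>R v))"
      by (simp add: z g_def fun_eq_iff)
    then show ?thesis using line[of v] by (intro pd_eqI) simp
  qed
  have hom: "g (\<xi> + s *\<^sub>R \<xi>) = (1 + s) ^ m * g \<xi>" for s
  proof -
    have "(\<Prod>b\<in>Basis. ((\<xi> + s *\<^sub>R \<xi>) \<bullet> b) ^ a b) = (1 + s) ^ m * (\<Prod>b\<in>Basis. (\<xi> \<bullet> b) ^ a b)"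
      if "a \<in> multi_idx m" for a
    proof -
      have "(\<Prod>b\<in>Basis. ((\<xi> + s *\<^sub>R \<xi>) \<bullet> b) ^ a b) = (\<Prod>b\<in>Basis. (1 + s) ^ a b * (\<xi> \<bullet> b) ^ a b)"
      proof (intro prod.cong refl)
        fix b :: "'n pt"
        have "(\<xi> + s *\<^sub>R \<xi>) \<bullet> b = (1 + s) * (\<xi> \<bullet> b)" by (simp add: inner_add_left algebra_simps)
        then show "((\<xi> + s *\<^sub>R \<xi>) \<bullet> b) ^ a b = (1 + s) ^ a b * (\<xi> \<bullet> b) ^ a b"
          by (simp add: power_mult_distrib)
      qed
      also have "\<dots> = (1 + s) ^ (\<Sum>b\<in>Basis. a b) * (\<Prod>b\<in>Basis. (\<xi> \<bullet> b) ^ a b)"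
        by (simp add: prod.distrib power_sum)
      finally show ?thesis using that by (simp add: multi_idx_def)
    qed
    then show ?thesis unfolding g_eq by (simp add: sum_distrib_left algebra_simps cong: sum.cong)
  qed
  have Dxi: "D \<xi> = real m * g \<xi>"
  proof -
    have "((\<lambda>s. (1 + s) ^ m * g \<xi>) has_real_derivative (real m * (1 + 0) ^ (m - 1) * 1) * g \<xi>) (at 0)"
      by (intro derivative_eq_intros) auto
    moreover have "((\<lambda>s. (1 + s) ^ m * g \<xi>) has_real_derivative D \<xi>) (at 0)"
      using line[of \<xi>] hom by simp
    ultimately show ?thesis using DERIV_unique by fastforce
  qed
  have vec: "xt z *\<^sub>R et + (\<Sum>i\<in>UNIV. xq i z *\<^sub>R eq i + xp i z *\<^sub>R ep i) = \<xi>"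
  proof -
    obtain q p t where "\<xi> = (q, p, t)" by (cases \<xi>) auto
    moreover have "(0, 0, t) + (\<Sum>i\<in>UNIV. (q $ i *\<^sub>R axis i (1::real), p $ i *\<^sub>R axis i (1::real), 0::real)) = (q, p, t)"
      by (simp add: prod_eq_iff fst_sum snd_sum basis_exp_R)
    ultimately show ?thesis
      by (simp add: z coord_defs eq_def ep_def et_def sum.distrib)
  qed
  have "vf I3 aE uA S z = xt z * D et + (\<Sum>i\<in>UNIV. xq i z * D (eq i) + xp i z * D (ep i))"
    by (simp add: vf_def sum_I3 QXi_def PXi_def TXi_def pdD)
  also have "\<dots> = D (xt z *\<^sub>R et + (\<Sum>i\<in>UNIV. xq i z *\<^sub>R eq i + xp i z *\<^sub>R ep i))"
    using lin by (simp add: linear_add linear_sum linear_scale)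
  also have "\<dots> = real m * S z" unfolding vec Dxi by (simp add: g_def z)
  finally show ?thesis .
qed

definition Cl :: "int \<Rightarrow> ('n::finite pt \<times> 'n pt \<Rightarrow> real) \<Rightarrow> bool" where
  "Cl m T \<longleftrightarrow> smooth_fn T \<and> (\<forall>z. vf I3 aE uA T z = real_of_int m * T z)"

lemma Xop_eq: "Xop \<delta> m T = (\<lambda>z. vf I3 aD uD T z + (2 * (real CARD('n) + 1) * \<delta> + real_of_int m) * xt z * T z)"
  for T :: "'n::finite pt \<times> 'n pt \<Rightarrow> real"
  by (simp add: fun_eq_iff Xop_def Dop_vf xt_def)

lemma ialpha_eq: "ialpha T = vf I3 aA uA T"
  by (simp add: fun_eq_iff ialpha_vf)

lemma Cl_smooth: "Cl m T \<Longrightarrow> smooth_fn T" by (simp add: Cl_def)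

lemma Cl_X: assumes "Cl m T" shows "Cl (m + 1) (Xop \<delta> m T)"
proof -
  have sm: "smooth_fn T" and E: "\<And>z. vf I3 aE uA T z = real_of_int m * T z" using assms by (auto simp: Cl_def)
  show ?thesis unfolding Cl_def Xop_eq
    using smooth_X[OF sm] K2[OF sm E] by simp
qed

lemma Cl_A: assumes "Cl m T" shows "Cl (m - 1) (ialpha T)"
proof -
  have sm: "smooth_fn T" and E: "\<And>z. vf I3 aE uA T z = real_of_int m * T z" using assms by (auto simp: Cl_def)
  show ?thesis unfolding Cl_def ialpha_eq
    using smooth_vf3(2)[OF sm] K3[OF sm E] by simp
qed

lemma comm1:
  fixes T :: "'n::finite pt \<times> 'n pt \<Rightarrow> real"
  assumes "Cl m T"
  shows "ialpha (Xop \<delta> m T) z - Xop \<delta> (m - 1) (ialpha T) z = rr CARD('n) \<delta> 1 m * T z"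
proof -
  have sm: "smooth_fn T" and E: "\<And>z. vf I3 aE uA T z = real_of_int m * T z" using assms by (auto simp: Cl_def)
  have e1: "(2 * (real CARD('n) + 1) * \<delta> + real_of_int (m - 1)) = (2 * (real CARD('n) + 1) * \<delta> + real_of_int m) - 1"
    by simp
  have "ialpha (Xop \<delta> m T) z - Xop \<delta> (m - 1) (ialpha T) z
     = -(1/2) * vf I3 aE uA T z - (2 * (real CARD('n) + 1) * \<delta> + real_of_int m) / 2 * T z"
    unfolding Xop_eq ialpha_eq e1 by (rule K1[OF sm])
  then show ?thesis by (simp add: E rr_def field_simps)
qed

lemma X_lin: "smooth_fn f \<Longrightarrow> smooth_fn g \<Longrightarrow> Xop \<delta> m (\<lambda>z. f z + c * g z) z = Xop \<delta> m f z + c * Xop \<delta> m g z"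
  unfolding Xop_eq
  by (subst vf_add) (auto simp: vf_cmult algebra_simps)

lemma A_lin: "smooth_fn f \<Longrightarrow> smooth_fn g \<Longrightarrow> ialpha (\<lambda>z. f z + c * g z) z = ialpha f z + c * ialpha g z"
  unfolding ialpha_eq
  by (subst vf_add) (auto simp: vf_cmult algebra_simps)

lemma Cl_Xpow: "Cl k S \<Longrightarrow> Cl (k + int l) (Xpow \<delta> l k S)"
proof (induction l)
  case (Suc l)
  then show ?case using Cl_X[OF Suc.IH[OF Suc.prems], of \<delta>] by (simp add: algebra_simps)
qed simp

lemma Cl_Apow: "Cl k S \<Longrightarrow> Cl (k - int l) ((ialpha ^^ l) S)"
proof (induction l)
  case (Suc l)
  then show ?case using Cl_A[OF Suc.IH[OF Suc.prems]] by (simp add: algebra_simps)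
qed simp



lemma ident1:
  fixes S :: "'n::finite pt \<times> 'n pt \<Rightarrow> real"
  assumes Cl: "Cl k S"
  shows "ialpha (Xpow \<delta> l k S) z - Xpow \<delta> l (k - 1) (ialpha S) z = rr CARD('n) \<delta> l k * Xpow \<delta> (l - 1) k S z"
proof (induction l arbitrary: z)
  case 0
  show ?case by (simp add: rr_def)
next
  case (Suc l)
  have ClX: "Cl (k + int l) (Xpow \<delta> l k S)" by (rule Cl_Xpow[OF Cl])
  have c: "ialpha (Xop \<delta> (k + int l) (Xpow \<delta> l k S)) z
      = Xop \<delta> (k + int l - 1) (ialpha (Xpow \<delta> l k S)) z + rr CARD('n) \<delta> 1 (k + int l) * Xpow \<delta> l k S z"
    using comm1[OF ClX, of \<delta> z] by simp
  have IH': "ialpha (Xpow \<delta> l k S) = (\<lambda>z. Xpow \<delta> l (k - 1) (ialpha S) z + rr CARD('n) \<delta> l k * Xpow \<delta> (l - 1) k S z)"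
  proof
    fix z show "ialpha (Xpow \<delta> l k S) z = Xpow \<delta> l (k - 1) (ialpha S) z + rr CARD('n) \<delta> l k * Xpow \<delta> (l - 1) k S z"
      using Suc.IH[of z] by simp
  qed
  have sm1: "smooth_fn (Xpow \<delta> l (k - 1) (ialpha S))" using Cl_Xpow[OF Cl_A[OF Cl]] Cl_smooth by blast
  have sm2: "smooth_fn (Xpow \<delta> (l - 1) k S)" using Cl_Xpow[OF Cl] Cl_smooth by blast
  have lin: "Xop \<delta> (k + int l - 1) (ialpha (Xpow \<delta> l k S)) z
     = Xop \<delta> (k + int l - 1) (Xpow \<delta> l (k - 1) (ialpha S)) z + rr CARD('n) \<delta> l k * Xop \<delta> (k + int l - 1) (Xpow \<delta> (l - 1) k S) z"
    unfolding IH' by (rule X_lin[OF sm1 sm2])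
  have e1: "Xop \<delta> (k + int l - 1) (Xpow \<delta> l (k - 1) (ialpha S)) = Xpow \<delta> (Suc l) (k - 1) (ialpha S)"
    by (simp add: algebra_simps)
  have e2: "rr CARD('n) \<delta> l k * Xop \<delta> (k + int l - 1) (Xpow \<delta> (l - 1) k S) z = rr CARD('n) \<delta> l k * Xpow \<delta> l k S z"
  proof (cases l)
    case 0 then show ?thesis by (simp add: rr_def)
  next
    case (Suc l') then show ?thesis by (simp add: algebra_simps)
  qed
  have rr: "rr CARD('n) \<delta> (Suc l) k = rr CARD('n) \<delta> 1 (k + int l) + rr CARD('n) \<delta> l k"
    by (simp add: rr_def field_simps)
  have X1: "Xpow \<delta> (Suc l) k S = Xop \<delta> (k + int l) (Xpow \<delta> l k S)" by simp
  have e1z: "Xop \<delta> (k + int l - 1) (Xpow \<delta> l (k - 1) (ialpha S)) z = Xpow \<delta> (Suc l) (k - 1) (ialpha S) z"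
    using e1 by simp
  have dr: "(rr CARD('n) \<delta> 1 (k + int l) + rr CARD('n) \<delta> l k) * Xpow \<delta> l k S z
     = rr CARD('n) \<delta> 1 (k + int l) * Xpow \<delta> l k S z + rr CARD('n) \<delta> l k * Xpow \<delta> l k S z"
    by (rule distrib_right)
  have sl: "Suc l - 1 = l" by simp
  show ?case unfolding X1 rr sl using c lin e1z e2 dr by linarith
qed



lemma ident2:
  fixes S :: "'n::finite pt \<times> 'n pt \<Rightarrow> real"
  assumes Cl: "Cl k S"
  shows "Xop \<delta> (k - int l) ((ialpha ^^ l) S) z - (ialpha ^^ l) (Xop \<delta> k S) z
     = - rr CARD('n) \<delta> l (k - int l + 1) * (ialpha ^^ (l - 1)) S z"
proof (induction l arbitrary: z)
  case 0
  show ?case by (simp add: rr_def)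
next
  case (Suc l)
  have ClA: "Cl (k - int l) ((ialpha ^^ l) S)" by (rule Cl_Apow[OF Cl])
  have c: "Xop \<delta> (k - int l - 1) (ialpha ((ialpha ^^ l) S)) z
      = ialpha (Xop \<delta> (k - int l) ((ialpha ^^ l) S)) z - rr CARD('n) \<delta> 1 (k - int l) * (ialpha ^^ l) S z"
    using comm1[OF ClA, of \<delta> z] by simp
  have IH': "Xop \<delta> (k - int l) ((ialpha ^^ l) S)
     = (\<lambda>z. (ialpha ^^ l) (Xop \<delta> k S) z + (- rr CARD('n) \<delta> l (k - int l + 1)) * (ialpha ^^ (l - 1)) S z)"
  proof
    fix z show "Xop \<delta> (k - int l) ((ialpha ^^ l) S) z
      = (ialpha ^^ l) (Xop \<delta> k S) z + (- rr CARD('n) \<delta> l (k - int l + 1)) * (ialpha ^^ (l - 1)) S z"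
      using Suc.IH[of z] by simp
  qed
  have sm1: "smooth_fn ((ialpha ^^ l) (Xop \<delta> k S))" using Cl_Apow[OF Cl_X[OF Cl]] Cl_smooth by blast
  have sm2: "smooth_fn ((ialpha ^^ (l - 1)) S)" using Cl_Apow[OF Cl] Cl_smooth by blast
  have lin: "ialpha (Xop \<delta> (k - int l) ((ialpha ^^ l) S)) z
     = ialpha ((ialpha ^^ l) (Xop \<delta> k S)) z + (- rr CARD('n) \<delta> l (k - int l + 1)) * ialpha ((ialpha ^^ (l - 1)) S) z"
    unfolding IH' by (rule A_lin[OF sm1 sm2])
  have e2: "rr CARD('n) \<delta> l (k - int l + 1) * ialpha ((ialpha ^^ (l - 1)) S) z = rr CARD('n) \<delta> l (k - int l + 1) * (ialpha ^^ l) S z"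
  proof (cases l)
    case 0 then show ?thesis by (simp add: rr_def)
  next
    case (Suc l') then show ?thesis by simp
  qed
  have lin': "ialpha (Xop \<delta> (k - int l) ((ialpha ^^ l) S)) z
     = ialpha ((ialpha ^^ l) (Xop \<delta> k S)) z - rr CARD('n) \<delta> l (k - int l + 1) * (ialpha ^^ l) S z"
    using lin e2 by simp
  have rr: "rr CARD('n) \<delta> (Suc l) (k - int l - 1 + 1) = rr CARD('n) \<delta> 1 (k - int l) + rr CARD('n) \<delta> l (k - int l + 1)"
    by (simp add: rr_def field_simps)
  have kk: "k - int (Suc l) = k - int l - 1" by simp
  have dr: "(rr CARD('n) \<delta> 1 (k - int l) + rr CARD('n) \<delta> l (k - int l + 1)) * (ialpha ^^ l) S z
     = rr CARD('n) \<delta> 1 (k - int l) * (ialpha ^^ l) S z + rr CARD('n) \<delta> l (k - int l + 1) * (ialpha ^^ l) S z"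
    by (rule distrib_right)
  have fp: "(ialpha ^^ Suc l) S = ialpha ((ialpha ^^ l) S)" "(ialpha ^^ Suc l) (Xop \<delta> k S) = ialpha ((ialpha ^^ l) (Xop \<delta> k S))"
    "(ialpha ^^ (Suc l - 1)) S = (ialpha ^^ l) S"
    by simp_all
  show ?case unfolding kk fp rr using c lin' dr by linarith
qed



theorem proposition4p3:
  fixes \<delta> :: real and k :: int and l :: nat
    and S :: "'n::finite pt \<times> 'n pt \<Rightarrow> real"
  assumes "k \<ge> 0" and "l \<ge> 1" and "S \<in> Rsp k"
  shows "(ialpha (Xpow \<delta> l k S) - Xpow \<delta> l (k - 1) (ialpha S)
           = (\<lambda>z. rr CARD('n) \<delta> l k * Xpow \<delta> (l - 1) k S z)) \<and>
         (Xop \<delta> (k - int l) ((ialpha ^^ l) S) - (ialpha ^^ l) (Xop \<delta> k S)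
           = (\<lambda>z. - rr CARD('n) \<delta> l (k - int l + 1) * (ialpha ^^ (l - 1)) S z))"
proof -
  have sm: "smooth_fn S" and hp: "hom_poly_xi (nat k) S"
    using assms(1,3) by (auto simp: Rsp_def)
  have Cl: "Cl k S"
    unfolding Cl_def using sm euler_hom[OF hp] assms(1) by simp
  show ?thesis
    using ident1[OF Cl] ident2[OF Cl] by (simp add: fun_eq_iff fun_diff_def)
qed

end
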